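(* Let $\mu$ and $\lambda$ be constants, and let $r_\mu:=1/\sqrt{-\mu}$ if $\mu<0$ and $r_\mu:=+\infty$ if $\mu\ge 0$. On the ball $\mathbb{B}^n(r_\mu)=\{x\in\mathbb{R}^n:|x|<r_\mu\}$ consider the Riemannian metric $$\bar\alpha=\frac{\sqrt{(1+\mu|x|^2)|y|^2-\mu\langle x,y\rangle^2}}{(1+\mu|x|^2)^{3/4}}$$ and the $1$-form $$\bar\beta=\frac{\lambda\langle x,y\rangle}{(1+\mu|x|^2)^{5/4}}.$$ Then $\bar\alpha$ is dually flat on $\mathbb{B}^n(r_\mu)$, and $\bar\beta$ is dually related with respect to $\bar\alpha$.
   Context: $|\cdot|$ and $\langle\cdot,\cdot\rangle$ are the Euclidean norm and inner product; standard coordinates $x=(x^i)$, $y=(y^i)$ are used. A Riemannian metric $\alpha=\sqrt{a_{ij}(x)y^iy^j}$ on an open set $U\subseteq\mathbb{R}^n$ is dually flat if $[\alpha^2]_{x^ky^l}y^k-2[\alpha^2]_{x^l}=0$; equivalently its spray coefficients $G^i=\frac12\Gamma^i{}_{jk}y^jy^k$ satisfy $G^i=2\theta\,y^i+\alpha^2\theta^i$ for some $1$-form $\theta=\theta_iy^i$ on $U$, where $\theta^i:=a^{ij}\theta_j$ (this $\theta$ is uniquely determined by $G^i$). Given such a dually flat $\alpha$ with this $\theta$, a $1$-form $\beta=b_iy^i$ on $U$ is called dually related with respect to $\alpha$ if $b_{i|j}=2\theta_ib_j+c(x)a_{ij}$ for some scalar function $c(x)$ on $U$, where $b_{i|j}$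 denotes the covariant derivative of $\beta$ with respect to $\alpha$. *)

theory Defs
  imports "HOL-Analysis.Analysis"
begin

text \<open>A Riemannian metric
  alpha = sqrt(a_ij(x) y^i y^j) is given by its coefficient matrix a :: real^'n \<Rightarrow> real^'n^'n,
  a 1-form beta = b_i(x) y^i by its coefficient vector b :: real^'n \<Rightarrow> real^'n.\<close>

definition pdx :: "(real^'n \<Rightarrow> real^'n \<Rightarrow> real) \<Rightarrow> 'n \<Rightarrow> real^'n \<Rightarrow> real^'n \<Rightarrow> real" where
  "pdx G k x y = frechet_derivative (\<lambda>z. G z y) (at x) (axis k 1)"

definition pdy :: "(real^'n \<Rightarrow> real^'n \<Rightarrow> real) \<Rightarrow> 'n \<Rightarrow> real^'n \<Rightarrow> real^'n \<Rightarrow> real" where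
  "pdy G l x y = frechet_derivative (\<lambda>w. G x w) (at y) (axis l 1)"

definition pd :: "(real^'n \<Rightarrow> real) \<Rightarrow> 'n \<Rightarrow> real^'n \<Rightarrow> real" where
  "pd f k x = frechet_derivative f (at x) (axis k 1)"

definition alpha_sq :: "(real^'n \<Rightarrow> real^'n^'n) \<Rightarrow> real^'n \<Rightarrow> real^'n \<Rightarrow> real" where
  "alpha_sq a x y = y \<bullet> (a x *v y)"

definition riemannian_metric_on :: "(real^'n) set \<Rightarrow> (real^'n \<Rightarrow> real^'n^'n) \<Rightarrow> bool" where
  "riemannian_metric_on U a \<longleftrightarrow> open U \<and>
     (\<forall>x\<in>U. (\<forall>i j. a x $ i $ j = a x $ j $ i) \<and>
             (\<forall>y. y \<noteq> 0 \<longrightarrow> alpha_sq a x y > 0) \<and>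
             (\<forall>i j. (\<lambda>z. a z $ i $ j) differentiable (at x)))"

definition dually_flat_on :: "(real^'n) set \<Rightarrow> (real^'n \<Rightarrow> real^'n^'n) \<Rightarrow> bool" where
  "dually_flat_on U a \<longleftrightarrow> riemannian_metric_on U a \<and>
     (\<forall>x\<in>U. \<forall>y. \<forall>l.
        (\<Sum>k\<in>UNIV. pdx (pdy (alpha_sq a) l) k x y * y $ k) - 2 * pdx (alpha_sq a) l x y = 0)"

definition inv_metric :: "(real^'n \<Rightarrow> real^'n^'n) \<Rightarrow> real^'n \<Rightarrow> real^'n^'n" where
  "inv_metric a x = matrix_inv (a x)"

definition christoffel :: "(real^'n \<Rightarrow> real^'n^'n) \<Rightarrow> 'n \<Rightarrow> 'n \<Rightarrow> 'n \<Rightarrow> real^'n \<Rightarrow> real" where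
  "christoffel a i j k x = (1/2) * (\<Sum>l\<in>UNIV. inv_metric a x $ i $ l *
      (pd (\<lambda>z. a z $ l $ k) j x + pd (\<lambda>z. a z $ l $ j) k x - pd (\<lambda>z. a z $ j $ k) l x))"

definition spray :: "(real^'n \<Rightarrow> real^'n^'n) \<Rightarrow> 'n \<Rightarrow> real^'n \<Rightarrow> real^'n \<Rightarrow> real" where
  "spray a i x y = (1/2) * (\<Sum>j\<in>UNIV. \<Sum>k\<in>UNIV. christoffel a i j k x * y $ j * y $ k)"

definition spray_form :: "(real^'n) set \<Rightarrow> (real^'n \<Rightarrow> real^'n^'n) \<Rightarrow> (real^'n \<Rightarrow> real^'n) \<Rightarrow> bool" where
  "spray_form U a \<theta> \<longleftrightarrow> (\<forall>x\<in>U. \<forall>y. \<forall>i.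
     spray a i x y = 2 * (\<theta> x \<bullet> y) * y $ i + alpha_sq a x y * (inv_metric a x *v \<theta> x) $ i)"

definition cov_deriv :: "(real^'n \<Rightarrow> real^'n^'n) \<Rightarrow> (real^'n \<Rightarrow> real^'n) \<Rightarrow> 'n \<Rightarrow> 'n \<Rightarrow> real^'n \<Rightarrow> real" where
  "cov_deriv a b i j x = pd (\<lambda>z. b z $ i) j x - (\<Sum>k\<in>UNIV. b x $ k * christoffel a k i j x)"

definition dually_related_on :: "(real^'n) set \<Rightarrow> (real^'n \<Rightarrow> real^'n^'n) \<Rightarrow> (real^'n \<Rightarrow> real^'n) \<Rightarrow> bool" where
  "dually_related_on U a b \<longleftrightarrow> dually_flat_on U a \<and>
     (\<forall>x\<in>U. \<forall>i. (\<lambda>z. b z $ i) differentiable (at x)) \<and>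
     (\<exists>\<theta> c. spray_form U a \<theta> \<and>
        (\<forall>x\<in>U. \<forall>i j. cov_deriv a b i j x = 2 * \<theta> x $ i * b x $ j + c x * a x $ i $ j))"

definition ball_mu :: "real \<Rightarrow> (real^'n) set" where
  "ball_mu \<mu> = (if \<mu> < 0 then ball 0 (1 / sqrt (- \<mu>)) else UNIV)"

end

theory Submission
  imports Defs
begin

lemma ifmult: "(if P then (1::real) else 0) * g = (if P then g else 0)" "g * (if P then (1::real) else 0) = (if P then g else 0)"
  "a * (if P then b else 0) = (if P then a * b else (0::real))" "(if P then b else 0) * a = (if P then b * a else (0::real))" "(if P then b else 0) / a = (if P then b / a else (0::real))" by auto
lemma sum_if_const: "(\<Sum>k\<in>S. if P then g k else (0::real)) = (if P then (\<Sum>k\<in>S. g k) else 0)" by auto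

lemmas sumsimps = algebra_simps sum.distrib sum_distrib_left sum_distrib_right inner_vec_def power2_eq_square ifmult sum.delta sum.delta' sum_product sum_if_const sum_subtractf

definition ff :: "real \<Rightarrow> real^'n \<Rightarrow> real" where "ff \<mu> x = 1 + \<mu> * (x \<bullet> x)"
definition RR :: "real \<Rightarrow> real^'n \<Rightarrow> real" where "RR \<mu> x = ff \<mu> x powr (1/4)"
definition A0 :: "real \<Rightarrow> real^'n \<Rightarrow> real^'n^'n" where
  "A0 \<mu> x = (\<chi> i j. ((if i = j then ff \<mu> x else 0) - \<mu> * x$i * x$j) / RR \<mu> x ^ 6)"
definition B0 :: "real \<Rightarrow> real^'n \<Rightarrow> real^'n^'n" where
  "B0 \<mu> x = (\<chi> i j. ((if i = j then 1 else 0) + \<mu> * x$i * x$j) * RR \<mu> x ^ 2)"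

lemma ff_pos: assumes "x \<in> ball_mu \<mu>" shows "ff \<mu> x > 0"
proof (cases "\<mu> < 0")
  case True
  then have "norm x < 1 / sqrt (-\<mu>)" using assms by (simp add: ball_mu_def)
  then have "norm x ^ 2 < (1 / sqrt (-\<mu>))^2" by (simp add: power_strict_mono)
  then have "x \<bullet> x < 1 / (-\<mu>)" using True by (simp add: power2_norm_eq_inner power_divide)
  then have "(-\<mu>) * (x \<bullet> x) < 1" using True by (simp add: field_simps)
  then show ?thesis by (simp add: ff_def)
next
  case False
  then show ?thesis by (simp add: ff_def add_pos_nonneg)
qed

lemma open_ball_mu: "open (ball_mu \<mu>)" by (simp add: ball_mu_def)

lemma RR_pos: "ff \<mu> x > 0 \<Longrightarrow> RR \<mu> x > 0" by (simp add: RR_def)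
lemma RR4: "ff \<mu> x > 0 \<Longrightarrow> RR \<mu> x ^ 4 = ff \<mu> x"
  by (simp add: RR_def powr_realpow[symmetric] powr_powr)

lemma A0_sym: "A0 \<mu> x $ i $ j = A0 \<mu> x $ j $ i" by (auto simp: A0_def)

lemma A0_q: "y \<bullet> (A0 \<mu> x *v y) = (ff \<mu> x * (y \<bullet> y) - \<mu> * (x \<bullet> y)^2) / RR \<mu> x ^ 6"
  by (simp add: A0_def matrix_vector_mult_def sumsimps diff_divide_distrib add_divide_distrib sum_divide_distrib sum_subtractf)

lemma q_axis2: "(axis i 1 + axis j 1) \<bullet> (M *v (axis i 1 + axis j 1)) = M$i$i + M$j$j + M$i$j + M$j$i"
  by (simp add: matrix_vector_mult_def axis_def sumsimps)
lemma q_axis1: "(axis i 1) \<bullet> (M *v (axis i 1)) = (M$i$i::real)"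
  by (simp add: matrix_vector_mult_def axis_def sumsimps)
lemma polar: fixes M N :: "real^'n^'n"
  assumes "\<forall>i j. M$i$j = M$j$i" "\<forall>i j. N$i$j = N$j$i" "\<forall>y. y \<bullet> (M *v y) = y \<bullet> (N *v y)"
  shows "M = N"
proof -
  have "M$i$j = N$i$j" for i j
    using assms(3)[rule_format, of "axis i 1 + axis j 1"] assms(3)[rule_format, of "axis i 1"] assms(3)[rule_format, of "axis j 1"]
      assms(1,2) unfolding q_axis2 q_axis1 by (metis (no_types, lifting) add_left_cancel mult_2[symmetric] add.assoc mult_cancel_left zero_neq_numeral)
  then show ?thesis by (simp add: vec_eq_iff)
qed

lemma Q_nonneg: assumes "ff \<mu> x > 0" shows "0 \<le> ff \<mu> x * (y \<bullet> y) - \<mu> * (x \<bullet> y)^2"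
proof (cases "\<mu> \<ge> 0")
  case True
  have "\<mu> * (x \<bullet> y)^2 \<le> \<mu> * ((x \<bullet> x) * (y \<bullet> y))"
    using True Cauchy_Schwarz_ineq[of x y] by (rule mult_left_mono[rotated])
  moreover have "0 \<le> y \<bullet> y" by simp
  moreover have "ff \<mu> x * (y \<bullet> y) - \<mu> * (x \<bullet> y)^2 = y \<bullet> y + (\<mu> * ((x \<bullet> x) * (y \<bullet> y)) - \<mu> * (x \<bullet> y)^2)" by (simp add: ff_def algebra_simps)
  ultimately show ?thesis by linarith
next
  case False
  then have "0 \<le> - \<mu> * (x \<bullet> y)^2" by (simp add: mult_nonpos_nonneg)
  moreover have "0 \<le> ff \<mu> x * (y \<bullet> y)" using assms by simp
  ultimately show ?thesis by simp
qed

lemma RR_powr: assumes "ff \<mu> x > 0" shows "ff \<mu> x powr (3/4) = RR \<mu> x ^ 3" "ff \<mu> x powr (5/4) = RR \<mu> x ^ 5"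
  using assms by (simp_all add: RR_def powr_realpow[symmetric] powr_powr)

lemma a_eq:
  assumes a_sym: "\<forall>x\<in>ball_mu \<mu>. \<forall>i j. a x $ i $ j = a x $ j $ i"
    and a_alpha: "\<forall>x\<in>ball_mu \<mu>. \<forall>y. sqrt (alpha_sq a x y) =
        sqrt ((1 + \<mu> * (norm x)\<^sup>2) * (norm y)\<^sup>2 - \<mu> * (x \<bullet> y)\<^sup>2) / (1 + \<mu> * (norm x)\<^sup>2) powr (3/4)"
    and x: "x \<in> ball_mu \<mu>"
  shows "a x = A0 \<mu> x"
proof (rule polar)
  show "\<forall>i j. a x $ i $ j = a x $ j $ i" using a_sym x by blast
  show "\<forall>i j. A0 \<mu> x $ i $ j = A0 \<mu> x $ j $ i" using A0_sym by blast
  have fp: "ff \<mu> x > 0" using ff_pos x by blast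
  have Rp: "RR \<mu> x > 0" using RR_pos fp by blast
  show "\<forall>y. y \<bullet> (a x *v y) = y \<bullet> (A0 \<mu> x *v y)"
  proof
    fix y :: "real^'a"
    let ?Q = "ff \<mu> x * (y \<bullet> y) - \<mu> * (x \<bullet> y)^2"
    have h: "sqrt (alpha_sq a x y) = sqrt ?Q / RR \<mu> x ^ 3"
      using a_alpha x RR_powr(1)[OF fp] by (simp add: power2_norm_eq_inner ff_def)
    have Qn: "0 \<le> ?Q" using Q_nonneg[OF fp] .
    have "0 \<le> sqrt (alpha_sq a x y)" using h Qn Rp by simp
    then have an: "0 \<le> alpha_sq a x y" by simp
    have "alpha_sq a x y = (sqrt (alpha_sq a x y))^2" using an by simp
    also have "\<dots> = ?Q / RR \<mu> x ^ 6" using h Qn by (simp add: power_divide power_mult[symmetric])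
    finally show "y \<bullet> (a x *v y) = y \<bullet> (A0 \<mu> x *v y)" by (simp add: alpha_sq_def A0_q)
  qed
qed

lemma inv_unique: fixes A B :: "real^'n^'n" assumes "A ** B = mat 1" "B ** A = mat 1" shows "matrix_inv A = B"
proof -
  have ex: "\<exists>A'. A ** A' = mat 1 \<and> A' ** A = mat 1" using assms by blast
  define C where "C = matrix_inv A"
  have C: "A ** C = mat 1 \<and> C ** A = mat 1" unfolding C_def matrix_inv_def by (rule someI_ex[OF ex])
  have "C = C ** (A ** B)" using assms by (simp add: matrix_mul_rid)
  also have "\<dots> = (C ** A) ** B" by (simp add: matrix_mul_assoc)
  also have "\<dots> = B" using C by (simp add: matrix_mul_lid)
  finally show ?thesis by (simp add: C_def)
qed

lemma AB_entry: "(\<Sum>k\<in>UNIV. ((if i = k then ff \<mu> x else 0) - \<mu> * x$i * x$k) * ((if k = j then 1 else 0) + \<mu> * x$k * x$j))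
   = (if i = j then ff \<mu> x else 0)"
  by (simp add: ff_def sumsimps)
lemma BA_entry: "(\<Sum>k\<in>UNIV. ((if i = k then 1 else 0) + \<mu> * x$i * x$k) * ((if k = j then ff \<mu> x else 0) - \<mu> * x$k * x$j))
   = (if i = j then ff \<mu> x else 0)"
  by (simp add: ff_def sumsimps)

lemma inv_A0: assumes "ff \<mu> x > 0" shows "matrix_inv (A0 \<mu> x) = B0 \<mu> x"
proof (rule inv_unique)
  have R: "RR \<mu> x ^ 4 = ff \<mu> x" "RR \<mu> x > 0" using RR4 RR_pos assms by auto
  have e: "RR \<mu> x ^ 2 / RR \<mu> x ^ 6 = 1 / ff \<mu> x" using R by (simp add: field_simps flip: R(1))
  show "A0 \<mu> x ** B0 \<mu> x = mat 1"
  proof -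
    have "(A0 \<mu> x ** B0 \<mu> x) $ i $ j = mat 1 $ i $ j" for i j
    proof -
      have "(A0 \<mu> x ** B0 \<mu> x) $ i $ j = (\<Sum>k\<in>UNIV. ((if i = k then ff \<mu> x else 0) - \<mu> * x$i * x$k) * ((if k = j then 1 else 0) + \<mu> * x$k * x$j)) * (RR \<mu> x ^ 2 / RR \<mu> x ^ 6)"
        unfolding matrix_matrix_mult_def A0_def B0_def sum_distrib_right by (simp, rule sum.cong, simp_all add: field_simps)
      also have "\<dots> = mat 1 $ i $ j" unfolding AB_entry e using assms by (simp add: mat_def)
      finally show ?thesis .
    qed
    then show ?thesis by (simp add: vec_eq_iff)
  qed
  show "B0 \<mu> x ** A0 \<mu> x = mat 1"
  proof -
    have "(B0 \<mu> x ** A0 \<mu> x) $ i $ j = mat 1 $ i $ j" for i j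
    proof -
      have "(B0 \<mu> x ** A0 \<mu> x) $ i $ j = (\<Sum>k\<in>UNIV. ((if i = k then 1 else 0) + \<mu> * x$i * x$k) * ((if k = j then ff \<mu> x else 0) - \<mu> * x$k * x$j)) * (RR \<mu> x ^ 2 / RR \<mu> x ^ 6)"
        unfolding matrix_matrix_mult_def A0_def B0_def sum_distrib_right by (simp, rule sum.cong, simp_all add: field_simps)
      also have "\<dots> = mat 1 $ i $ j" unfolding BA_entry e using assms by (simp add: mat_def)
      finally show ?thesis .
    qed
    then show ?thesis by (simp add: vec_eq_iff)
  qed
qed

lemma d_ff: "((\<lambda>z. ff \<mu> z) has_derivative (\<lambda>h. 2 * \<mu> * (x \<bullet> h))) (at x)"
  unfolding ff_def
  by (rule has_derivative_eq_rhs, (rule derivative_intros)+, auto simp: inner_commute algebra_simps)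

lemma d_RR: assumes "ff \<mu> x > 0"
  shows "((\<lambda>z. RR \<mu> z) has_derivative (\<lambda>h. RR \<mu> x * (\<mu> * (x \<bullet> h)) / (2 * ff \<mu> x))) (at x)"
  unfolding RR_def
  by (rule has_derivative_eq_rhs, rule has_derivative_powr[OF d_ff has_derivative_const assms], auto simp: field_simps)

definition dA :: "real \<Rightarrow> real^'n \<Rightarrow> 'n \<Rightarrow> 'n \<Rightarrow> real^'n \<Rightarrow> real" where
  "dA \<mu> x l m h = ((if l = m then 2 * \<mu> * (x \<bullet> h) else 0) - \<mu> * (h$l * x$m + x$l * h$m)
     - ((if l = m then ff \<mu> x else 0) - \<mu> * x$l * x$m) * 3 * \<mu> * (x \<bullet> h) / ff \<mu> x) / RR \<mu> x ^ 6"

lemma d_nth: "((\<lambda>z::real^'n. z $ l) has_derivative (\<lambda>h. h $ l)) F"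
  by (rule bounded_linear_imp_has_derivative[OF bounded_linear_vec_nth])

lemma d_A0: assumes "ff \<mu> x > 0"
  shows "((\<lambda>z. A0 \<mu> z $ l $ m) has_derivative dA \<mu> x l m) (at x)"
proof -
  have R: "RR \<mu> x > 0" using RR_pos assms by blast
  have g: "((\<lambda>z. (if l = m then ff \<mu> z else 0) - \<mu> * z$l * z$m) has_derivative
     (\<lambda>h. (if l = m then 2 * \<mu> * (x \<bullet> h) else 0) - \<mu> * (h$l * x$m + x$l * h$m))) (at x)"
  proof -
    have p: "((\<lambda>z::real^'a. \<mu> * z$l * z$m) has_derivative (\<lambda>h. \<mu> * (h$l * x$m + x$l * h$m))) (at x)"
      by (rule has_derivative_eq_rhs, (rule derivative_intros d_nth)+, auto simp: algebra_simps)
    have i: "((\<lambda>z. if l = m then ff \<mu> z else 0) has_derivative (\<lambda>h. if l = m then 2 * \<mu> * (x \<bullet> h) else 0)) (at x)"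
      by (cases "l = m") (simp_all add: d_ff)
    show ?thesis by (rule has_derivative_diff[OF i p])
  qed
  have r6: "((\<lambda>z. RR \<mu> z ^ 6) has_derivative (\<lambda>h. of_nat 6 * (RR \<mu> x * (\<mu> * (x \<bullet> h)) / (2 * ff \<mu> x)) * RR \<mu> x ^ (6 - 1))) (at x)"
    by (rule has_derivative_power[OF d_RR[OF assms]])
  have e18: "RR \<mu> x ^ 18 = RR \<mu> x * RR \<mu> x ^ 17" using power_Suc[of "RR \<mu> x" 17] by simp
  have "((\<lambda>z. ((if l = m then ff \<mu> z else 0) - \<mu> * z$l * z$m) / RR \<mu> z ^ 6) has_derivative dA \<mu> x l m) (at x)"
    apply (rule has_derivative_eq_rhs)
     apply (rule has_derivative_divide[OF g r6])
    using R assms apply simp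
    using R assms apply (auto simp: dA_def fun_eq_iff field_simps e18)
    done
  then show ?thesis by (simp add: A0_def)
qed

definition Dg :: "real \<Rightarrow> real \<Rightarrow> real^'n \<Rightarrow> 'n \<Rightarrow> 'n \<Rightarrow> 'n \<Rightarrow> real" where
 "Dg c1 c3 x l m j = c1 * (x$j * (if l = m then 1 else 0) + (if j = l then 1 else 0) * x$m + x$l * (if j = m then 1 else 0)) + c3 * x$l * x$m * x$j"

lemma dA_axis: assumes "ff \<mu> x > 0"
  shows "dA \<mu> x l m (axis j 1) = Dg (- \<mu> / RR \<mu> x ^ 6) (3 * \<mu>^2 / (ff \<mu> x * RR \<mu> x ^ 6)) x l m j"
  using assms RR_pos[OF assms] unfolding dA_def Dg_def inner_axis by (simp add: axis_def, auto simp: field_simps power2_eq_square)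

lemma swap3: "(\<Sum>j\<in>UNIV. \<Sum>k\<in>UNIV. (c * (\<Sum>l\<in>UNIV. B l * E l j k)) * (y::real^'n) $ j * y $ k)
   = c * (\<Sum>l\<in>UNIV. B l * (\<Sum>j\<in>UNIV. \<Sum>k\<in>UNIV. E l j k * y $ j * y $ k))"
proof -
  have "(\<Sum>j\<in>UNIV. \<Sum>k\<in>UNIV. (c * (\<Sum>l\<in>UNIV. B l * E l j k)) * y $ j * y $ k)
     = (\<Sum>j\<in>UNIV. \<Sum>k\<in>UNIV. \<Sum>l\<in>UNIV. c * B l * (E l j k * y $ j * y $ k))"
    by (simp add: sum_distrib_left sum_distrib_right mult_ac)
  also have "\<dots> = (\<Sum>j\<in>UNIV. \<Sum>l\<in>UNIV. \<Sum>k\<in>UNIV. c * B l * (E l j k * y $ j * y $ k))"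
    by (rule sum.cong[OF refl], rule sum.swap)
  also have "\<dots> = (\<Sum>l\<in>UNIV. \<Sum>j\<in>UNIV. \<Sum>k\<in>UNIV. c * B l * (E l j k * y $ j * y $ k))"
    by (rule sum.swap)
  also have "\<dots> = c * (\<Sum>l\<in>UNIV. B l * (\<Sum>j\<in>UNIV. \<Sum>k\<in>UNIV. E l j k * y $ j * y $ k))"
    by (simp add: sum_distrib_left mult_ac)
  finally show ?thesis .
qed

lemma S_comb: "(\<Sum>j\<in>UNIV. \<Sum>k\<in>UNIV. (Dg c1 c3 x l k j + Dg c1 c3 x l j k - Dg c1 c3 x j k l) * y $ j * y $ k)
   = c1*(2*(x\<bullet>y)*y$l + x$l*(y\<bullet>y)) + c3*x$l*(x\<bullet>y)^2"
  by (simp add: Dg_def sumsimps)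

lemma B0_mul: "(\<Sum>l\<in>UNIV. B0 \<mu> x $ i $ l * (p * y$l + q * x$l)) = RR \<mu> x ^ 2 * (p * y$i + q * x$i + \<mu> * x$i * (p * (x \<bullet> y) + q * (x \<bullet> x)))"
  by (simp add: B0_def sumsimps)

lemma Q_pos: assumes "ff \<mu> x > 0" "y \<noteq> 0" shows "0 < ff \<mu> x * (y \<bullet> y) - \<mu> * (x \<bullet> y)^2"
proof (cases "\<mu> \<ge> 0")
  case True
  have "\<mu> * (x \<bullet> y)^2 \<le> \<mu> * ((x \<bullet> x) * (y \<bullet> y))"
    using True Cauchy_Schwarz_ineq[of x y] by (rule mult_left_mono[rotated])
  moreover have "0 < y \<bullet> y" using assms(2) by simp
  moreover have "ff \<mu> x * (y \<bullet> y) - \<mu> * (x \<bullet> y)^2 = y \<bullet> y + (\<mu> * ((x \<bullet> x) * (y \<bullet> y)) - \<mu> * (x \<bullet> y)^2)" by (simp add: ff_def algebra_simps)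
  ultimately show ?thesis by linarith
next
  case False
  then have "0 \<le> - \<mu> * (x \<bullet> y)^2" by (simp add: mult_nonpos_nonneg)
  moreover have "0 < ff \<mu> x * (y \<bullet> y)" using assms by simp
  ultimately show ?thesis by simp
qed

lemma pdy_formula: "pdy (alpha_sq a) l z y = (\<Sum>m\<in>UNIV. (a z $ l $ m + a z $ m $ l) * y $ m)"
proof -
  have d: "((\<lambda>w. w \<bullet> (a z *v w)) has_derivative (\<lambda>h. y \<bullet> (a z *v h) + h \<bullet> (a z *v y))) (at y)"
    by (rule has_derivative_inner[OF has_derivative_ident bounded_linear_imp_has_derivative[OF matrix_vector_mul_bounded_linear]])
  have "pdy (alpha_sq a) l z y = y \<bullet> (a z *v axis l 1) + axis l 1 \<bullet> (a z *v y)"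
    unfolding pdy_def alpha_sq_def frechet_derivative_at[OF d, symmetric] by simp
  also have "\<dots> = (\<Sum>m\<in>UNIV. (a z $ l $ m + a z $ m $ l) * y $ m)"
    by (simp add: matrix_vector_mult_def axis_def sumsimps)
  finally show ?thesis .
qed

lemma alpha_sum: "alpha_sq a z y = (\<Sum>i\<in>UNIV. \<Sum>m\<in>UNIV. y $ i * a z $ i $ m * y $ m)"
  by (simp add: alpha_sq_def matrix_vector_mult_def inner_vec_def sum_distrib_left mult_ac)

lemma swap2: "(\<Sum>k\<in>UNIV. bb k * (c * (\<Sum>l\<in>UNIV. B k l * E l))) = c * (\<Sum>l\<in>UNIV. (\<Sum>k\<in>UNIV. bb k * B k l) * (E l::real))"
proof -
  have "(\<Sum>k\<in>UNIV. bb k * (c * (\<Sum>l\<in>UNIV. B k l * E l))) = (\<Sum>k\<in>UNIV. \<Sum>l\<in>UNIV. c * (bb k * B k l * E l))"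
    by (simp add: sum_distrib_left mult_ac)
  also have "\<dots> = (\<Sum>l\<in>UNIV. \<Sum>k\<in>UNIV. c * (bb k * B k l * E l))" by (rule sum.swap)
  also have "\<dots> = c * (\<Sum>l\<in>UNIV. (\<Sum>k\<in>UNIV. bb k * B k l) * (E l::real))"
    by (simp add: sum_distrib_left sum_distrib_right mult_ac)
  finally show ?thesis .
qed

lemma bB: "(\<Sum>k\<in>UNIV. (lam * x$k / R5) * B0 \<mu> x $ k $ l) = lam * RR \<mu> x ^ 2 / R5 * (x$l + \<mu> * x$l * (x \<bullet> x))"
  by (simp add: B0_def sumsimps add_divide_distrib sum_divide_distrib)

lemma xE: "(\<Sum>l\<in>UNIV. C * x$l * (Dg c1 c3 x l j i + Dg c1 c3 x l i j - Dg c1 c3 x i j l))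
   = C * (c1 * (2 * x$i * x$j + (x \<bullet> x) * (if i = j then 1 else 0)) + c3 * (x \<bullet> x) * x$i * x$j)"
  by (simp add: Dg_def sumsimps)

lemma d_b: assumes "ff \<mu> x > 0"
  shows "((\<lambda>z. lam * z$i / RR \<mu> z ^ 5) has_derivative (\<lambda>h. lam * (h$i - 5 * x$i * \<mu> * (x \<bullet> h) / (2 * ff \<mu> x)) / RR \<mu> x ^ 5)) (at x)"
proof -
  have R: "RR \<mu> x > 0" using RR_pos assms by blast
  have e: "RR \<mu> x ^ 10 = RR \<mu> x * RR \<mu> x ^ 9" using power_Suc[of "RR \<mu> x" 9] by simp
  have g: "((\<lambda>z::real^'a. lam * z$i) has_derivative (\<lambda>h. lam * h$i)) (at x)"
    by (rule derivative_intros d_nth)+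
  have r5: "((\<lambda>z. RR \<mu> z ^ 5) has_derivative (\<lambda>h. of_nat 5 * (RR \<mu> x * (\<mu> * (x \<bullet> h)) / (2 * ff \<mu> x)) * RR \<mu> x ^ (5 - 1))) (at x)"
    by (rule has_derivative_power[OF d_RR[OF assms]])
  show ?thesis
    apply (rule has_derivative_eq_rhs)
     apply (rule has_derivative_divide[OF g r5])
    using R assms apply simp
    using R assms apply (auto simp: fun_eq_iff field_simps e)
    done
qed

lemma B0_x: "(B0 \<mu> x *v ((c::real) *\<^sub>R x)) $ i = RR \<mu> x^2 * (c * x$i + \<mu> * x$i * (c * (x \<bullet> x)))"
  by (simp add: B0_def matrix_vector_mult_def sumsimps)

lemma spray_alg:
  fixes R M X xy yy xi yi :: real
  assumes R: "R > 0" and MX: "M * X = R^4 - 1"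
  shows "1/2 * (1/2 * (R^2 * ((2 * (- M / R^6) * xy) * yi + ((- M / R^6) * yy + (3 * M^2 / (R^4 * R^6)) * xy^2) * xi
          + M * xi * ((2 * (- M / R^6) * xy) * xy + ((- M / R^6) * yy + (3 * M^2 / (R^4 * R^6)) * xy^2) * X))))
   = 2 * ((- M / (4 * R^4)) * xy) * yi + ((R^4 * yy - M * xy^2) / R^6) * (R^2 * ((- M / (4 * R^4)) * xi + M * xi * ((- M / (4 * R^4)) * X)))"
proof -
  have e1: "M * xi * (A * xy + B * X) = M * xi * A * xy + xi * B * (M * X)" for A B by (simp add: algebra_simps)
  have e2: "M * xi * (C * X) = xi * C * (M * X)" for C by (simp add: algebra_simps)
  have r50: "R^2 * R^48 = R^50" by (simp flip: power_add)
  show ?thesis unfolding e1 e2 MX using R apply (simp add: field_simps) apply (simp add: algebra_simps power2_eq_square flip: r50)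
    done
qed

lemma cov_alg:
  fixes R M X xi xj lam :: real
  assumes R: "R > 0" and MX: "M * X = R^4 - 1"
  shows "lam * ((if P then 1 else 0) - 5 * xi * M * xj / (2 * R^4)) / R^5 - 1/2 * ((lam * R^2 / R^5 * (1 + M * X)) *
      ((- M / R^6) * (2 * xi * xj + X * (if P then 1 else 0)) + (3 * M^2 / (R^4 * R^6)) * X * xi * xj))
   = 2 * ((- M / (4 * R^4)) * xi) * (lam * xj / R^5) + (lam * (1 + R^4) / (2 * R^3)) * (((if P then R^4 else 0) - M * xi * xj) / R^6)"
proof -
  define d :: real where "d = (if P then 1 else 0)"
  have dd: "(if P then R^4 else 0) = d * R^4" by (simp add: d_def)
  define t where "t = xi * xj"
  have e6: "R^6 = R * R^5" using power_Suc[of R 5] by simp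
  have C: "lam * R^2 / R^5 * (1 + M * X) = lam * R" using R MX by (simp add: field_simps e6)
  have h1: "(- M / R^6) * (2 * xi * xj + X * d) + (3 * M^2 / (R^4 * R^6)) * X * xi * xj
      = (- 2 * M * t - (R^4 - 1) * d) / R^6 + 3 * M * (R^4 - 1) * t / R^10"
  proof -
    have "(- M / R^6) * (2 * xi * xj + X * d) + (3 * M^2 / (R^4 * R^6)) * X * xi * xj
       = (- 2 * M * t - (M * X) * d) / R^6 + 3 * M * (M * X) * t / (R^4 * R^6)"
      using R by (simp add: t_def field_simps power2_eq_square)
    also have "\<dots> = (- 2 * M * t - (R^4 - 1) * d) / R^6 + 3 * M * (R^4 - 1) * t / R^10"
      unfolding MX by (simp add: power_add[symmetric])
    finally show ?thesis .
  qed
  have lhs: "lam * (d - 5 * xi * M * xj / (2 * R^4)) / R^5 - 1/2 * (lam * R * ((- 2 * M * t - (R^4 - 1) * d) / R^6 + 3 * M * (R^4 - 1) * t / R^10))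
     = lam * (d * (1 + R^4) / (2 * R^5) - M * t / R^9 - M * t / (2 * R^5))"
    using R unfolding t_def by (simp add: field_simps) algebra
  have rhs: "2 * ((- M / (4 * R^4)) * xi) * (lam * xj / R^5) + (lam * (1 + R^4) / (2 * R^3)) * ((d * R^4 - M * xi * xj) / R^6)
     = lam * (d * (1 + R^4) / (2 * R^5) - M * t / R^9 - M * t / (2 * R^5))"
    using R unfolding t_def by (simp add: field_simps)
  show ?thesis unfolding d_def[symmetric] dd C h1 lhs rhs ..
qed

theorem mainTheorem4:
  fixes \<mu> lam :: real
    and a :: "real^'n \<Rightarrow> real^'n^'n"
    and b :: "real^'n \<Rightarrow> real^'n"
  assumes a_sym: "\<forall>x\<in>ball_mu \<mu>. \<forall>i j. a x $ i $ j = a x $ j $ i"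
    and a_alpha: "\<forall>x\<in>ball_mu \<mu>. \<forall>y. sqrt (alpha_sq a x y) =
        sqrt ((1 + \<mu> * (norm x)\<^sup>2) * (norm y)\<^sup>2 - \<mu> * (x \<bullet> y)\<^sup>2) / (1 + \<mu> * (norm x)\<^sup>2) powr (3/4)"
    and b_beta: "\<forall>x\<in>ball_mu \<mu>. \<forall>y. b x \<bullet> y = lam * (x \<bullet> y) / (1 + \<mu> * (norm x)\<^sup>2) powr (5/4)"
  shows "dually_flat_on (ball_mu \<mu>) a \<and> dually_related_on (ball_mu \<mu>) a b"
proof -
  have fp: "\<And>x. x \<in> ball_mu \<mu> \<Longrightarrow> ff \<mu> x > 0" by (rule ff_pos)
  have Rp: "\<And>x. x \<in> ball_mu \<mu> \<Longrightarrow> RR \<mu> x > 0" using fp RR_pos by blast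
  have R4: "\<And>x. x \<in> ball_mu \<mu> \<Longrightarrow> RR \<mu> x ^ 4 = ff \<mu> x" using fp RR4 by blast
  have aeq: "\<And>x. x \<in> ball_mu \<mu> \<Longrightarrow> a x = A0 \<mu> x" using a_eq[OF a_sym a_alpha] .
  have op: "open (ball_mu \<mu>)" by (rule open_ball_mu)
  have pdA: "((\<lambda>z. a z $ l $ m) has_derivative dA \<mu> x l m) (at x)" if x: "x \<in> ball_mu \<mu>" for x :: "real^'n" and l m
    by (rule has_derivative_transform_within_open[OF d_A0[OF fp[OF x]] op x], simp add: aeq)
  define c1 where "c1 x = - \<mu> / RR \<mu> x ^ 6" for x :: "real^'n"
  define c3 where "c3 x = 3 * \<mu>^2 / (ff \<mu> x * RR \<mu> x ^ 6)" for x :: "real^'n"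
  have pdAv: "pd (\<lambda>z. a z $ l $ m) j x = Dg (c1 x) (c3 x) x l m j" if x: "x \<in> ball_mu \<mu>" for x :: "real^'n" and l m j
  proof -
    have "pd (\<lambda>z. a z $ l $ m) j x = dA \<mu> x l m (axis j 1)"
      unfolding pd_def frechet_derivative_at[OF pdA[OF x], symmetric] ..
    then show ?thesis using dA_axis[OF fp[OF x]] by (simp add: c1_def c3_def)
  qed
  have riem: "riemannian_metric_on (ball_mu \<mu>) a"
    unfolding riemannian_metric_on_def
  proof (intro conjI ballI allI impI)
    show "open (ball_mu \<mu>)" by (rule op)
  next
    fix x :: "real^'n" and i j assume "x \<in> ball_mu \<mu>" then show "a x $ i $ j = a x $ j $ i" using a_sym by blast
  next
    fix x :: "real^'n" and y assume x: "x \<in> ball_mu \<mu>" and y: "(y::real^'n) \<noteq> 0"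
    show "alpha_sq a x y > 0" using Q_pos[OF fp[OF x] y] Rp[OF x]
      by (simp add: alpha_sq_def aeq[OF x] A0_q)
  next
    fix x :: "real^'n" and i j assume x: "x \<in> ball_mu \<mu>"
    show "(\<lambda>z. a z $ i $ j) differentiable (at x)" using pdA[OF x] by (rule differentiableI)
  qed
  have df: "dually_flat_on (ball_mu \<mu>) a"
    unfolding dually_flat_on_def
  proof (intro conjI riem ballI allI)
    fix x :: "real^'n" and y :: "real^'n" and l assume x: "x \<in> ball_mu \<mu>"
    have h1: "((\<lambda>z. pdy (alpha_sq a) l z y) has_derivative (\<lambda>h. \<Sum>m\<in>UNIV. (dA \<mu> x l m h + dA \<mu> x m l h) * y $ m)) (at x)"
      unfolding pdy_formula
      by (intro has_derivative_sum has_derivative_mult_left has_derivative_add pdA[OF x])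
    have v1: "pdx (pdy (alpha_sq a) l) k x y = (\<Sum>m\<in>UNIV. (Dg (c1 x) (c3 x) x l m k + Dg (c1 x) (c3 x) x m l k) * y $ m)" for k
      unfolding pdx_def frechet_derivative_at[OF h1, symmetric]
      using dA_axis[OF fp[OF x]] by (simp add: c1_def c3_def)
    have h2: "((\<lambda>z. alpha_sq a z y) has_derivative (\<lambda>h. \<Sum>i\<in>UNIV. \<Sum>m\<in>UNIV. y $ i * dA \<mu> x i m h * y $ m)) (at x)"
      unfolding alpha_sum
      by (intro has_derivative_sum has_derivative_mult_left has_derivative_mult_right pdA[OF x])
    have v2: "pdx (alpha_sq a) l x y = (\<Sum>i\<in>UNIV. \<Sum>m\<in>UNIV. y $ i * Dg (c1 x) (c3 x) x i m l * y $ m)"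
      unfolding pdx_def frechet_derivative_at[OF h2, symmetric]
      using dA_axis[OF fp[OF x]] by (simp add: c1_def c3_def)
    show "(\<Sum>k\<in>UNIV. pdx (pdy (alpha_sq a) l) k x y * y $ k) - 2 * pdx (alpha_sq a) l x y = 0"
      unfolding v1 v2 by (simp add: Dg_def sumsimps)
  qed
  have beq: "b z $ i = lam * z$i / RR \<mu> z ^ 5" if z: "z \<in> ball_mu \<mu>" for z :: "real^'n" and i
    using b_beta[rule_format, OF z, of "axis i 1"] RR_powr(2)[OF fp[OF z]]
    by (simp add: inner_axis power2_norm_eq_inner ff_def)
  have pdb: "((\<lambda>z. b z $ i) has_derivative (\<lambda>h. lam * (h$i - 5 * x$i * \<mu> * (x \<bullet> h) / (2 * ff \<mu> x)) / RR \<mu> x ^ 5)) (at x)"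
    if x: "x \<in> ball_mu \<mu>" for x :: "real^'n" and i
    by (rule has_derivative_transform_within_open[OF d_b[OF fp[OF x]] op x], simp add: beq)
  define \<theta> where "\<theta> x = (- \<mu> / (4 * ff \<mu> x)) *\<^sub>R x" for x :: "real^'n"
  define cc where "cc x = lam * (1 + ff \<mu> x) / (2 * RR \<mu> x ^ 3)" for x :: "real^'n"
  have invm: "inv_metric a x = B0 \<mu> x" if x: "x \<in> ball_mu \<mu>" for x :: "real^'n"
    unfolding inv_metric_def aeq[OF x] using inv_A0[OF fp[OF x]] .
  have chr: "christoffel a i j k x = 1/2 * (\<Sum>l\<in>UNIV. B0 \<mu> x $ i $ l *
      (Dg (c1 x) (c3 x) x l k j + Dg (c1 x) (c3 x) x l j k - Dg (c1 x) (c3 x) x j k l))"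
    if x: "x \<in> ball_mu \<mu>" for x :: "real^'n" and i j k
    unfolding christoffel_def invm[OF x] pdAv[OF x] ..
  have sf: "spray_form (ball_mu \<mu>) a \<theta>"
    unfolding spray_form_def
  proof (intro ballI allI)
    fix x :: "real^'n" and y :: "real^'n" and i assume x: "x \<in> ball_mu \<mu>"
    let ?p = "2 * c1 x * (x \<bullet> y)" and ?q = "c1 x * (y \<bullet> y) + c3 x * (x \<bullet> y)^2"
    have S: "(\<Sum>j\<in>UNIV. \<Sum>k\<in>UNIV. (Dg (c1 x) (c3 x) x l k j + Dg (c1 x) (c3 x) x l j k - Dg (c1 x) (c3 x) x j k l) * y $ j * y $ k)
       = ?p * y$l + ?q * x$l" for l
      unfolding S_comb by (simp add: algebra_simps)
    have "spray a i x y = 1/2 * (1/2 * (\<Sum>l\<in>UNIV. B0 \<mu> x $ i $ l * (?p * y$l + ?q * x$l)))"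
      unfolding spray_def chr[OF x] swap3 S ..
    also have "\<dots> = 1/2 * (1/2 * (RR \<mu> x ^ 2 * (?p * y$i + ?q * x$i + \<mu> * x$i * (?p * (x \<bullet> y) + ?q * (x \<bullet> x)))))"
      unfolding B0_mul ..
    also have "\<dots> = 2 * (\<theta> x \<bullet> y) * y $ i + alpha_sq a x y * (inv_metric a x *v \<theta> x) $ i"
    proof -
      have X: "\<mu> * (x \<bullet> x) = RR \<mu> x ^ 4 - 1" using R4[OF x] by (simp add: ff_def)
      have F: "ff \<mu> x = RR \<mu> x ^ 4" using R4[OF x] by simp
      show ?thesis
        unfolding invm[OF x] \<theta>_def B0_x alpha_sq_def aeq[OF x] A0_q
        unfolding F c1_def c3_def
        using spray_alg[OF Rp[OF x] X, where xy="x \<bullet> y" and yy="y \<bullet> y" and xi="x $ i" and yi="y $ i"] by simp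
    qed
    finally show "spray a i x y = 2 * (\<theta> x \<bullet> y) * y $ i + alpha_sq a x y * (inv_metric a x *v \<theta> x) $ i" .
  qed
  have cov: "cov_deriv a b i j x = 2 * \<theta> x $ i * b x $ j + cc x * a x $ i $ j"
    if x: "x \<in> ball_mu \<mu>" for x :: "real^'n" and i j
  proof -
    have X: "\<mu> * (x \<bullet> x) = RR \<mu> x ^ 4 - 1" using R4[OF x] by (simp add: ff_def)
    have F: "ff \<mu> x = RR \<mu> x ^ 4" using R4[OF x] by simp
    have p1: "pd (\<lambda>z. b z $ i) j x = lam * ((if i = j then 1 else 0) - 5 * x$i * \<mu> * x$j / (2 * ff \<mu> x)) / RR \<mu> x ^ 5"
      unfolding pd_def frechet_derivative_at[OF pdb[OF x], symmetric] by (simp add: inner_axis, simp add: axis_def)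
    have p2: "(\<Sum>k\<in>UNIV. b x $ k * christoffel a k i j x) = 1/2 * (\<Sum>l\<in>UNIV. (lam * RR \<mu> x ^ 2 / RR \<mu> x ^ 5 * (1 + \<mu> * (x \<bullet> x))) * x$l *
       (Dg (c1 x) (c3 x) x l j i + Dg (c1 x) (c3 x) x l i j - Dg (c1 x) (c3 x) x i j l))"
      unfolding chr[OF x] beq[OF x] swap2 bB by (simp add: algebra_simps)
    show ?thesis
      unfolding cov_deriv_def p1 p2 unfolding xE \<theta>_def beq[OF x] aeq[OF x]
      unfolding F c1_def c3_def cc_def
      using cov_alg[OF Rp[OF x] X, where lam=lam and xi="x$i" and xj="x$j" and P="i = j"]
      by (simp add: A0_def F)
  qed
  show ?thesis
    unfolding dually_related_on_def
  proof (intro conjI df ballI allI exI[of _ \<theta>] exI[of _ cc] sf)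
    fix x :: "real^'n" and i assume x: "x \<in> ball_mu \<mu>"
    show "(\<lambda>z. b z $ i) differentiable at x" using pdb[OF x] by (rule differentiableI)
  next
    fix x :: "real^'n" and i j assume x: "x \<in> ball_mu \<mu>"
    show "cov_deriv a b i j x = 2 * \<theta> x $ i * b x $ j + cc x * a x $ i $ j" by (rule cov[OF x])
  qed
qed
end
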